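(* Let $\lambda>0$, let $\mathcal{Y}$, $g$ be as in the context (with $\mu$ and $K(y,y)$ continuous), and let $(y_1^*,y_2^* )\in\operatorname*{argmax}_{(y_1,y_2)\in\mathcal{Y}\times\mathcal{Y}}\mathrm{EUBO}(y_1,y_2)$. Then $$V_\lambda(y_1^*,y_2^* )\;\ge\;\max_{(y_1,y_2)\in\mathcal{Y}\times\mathcal{Y}}V_0(y_1,y_2)-\lambda C,\qquad C=\frac{e^{-1/2}}{\sqrt{2}}.$$
   Context: Let $\mathcal{Y}\subseteq\mathbb{R}^k$ be compact. Let $g$ be a random function on $\mathbb{R}^k$ distributed as a Gaussian process with mean function $\mu:\mathbb{R}^k\to\mathbb{R}$ and covariance function $K:\mathbb{R}^k\times\mathbb{R}^k\to\mathbb{R}$; all probabilities and expectations $\mathbb{P},\mathbb{E}$ are with respect to the law of $g$ and of the response below. For a query $(y_1,y_2)\in\mathbb{R}^k\times\mathbb{R}^k$ and noise level $\lambda\ge 0$, the response $r(y_1,y_2)\in\{1,2\}$ is a random variable with: if $\lambda>0$, $\mathbb{P}(r(y_1,y_2)=1\mid g)=\Phi\big((g(y_1)-g(y_2))/(\sqrt{2}\lambda)\big)$ and $\mathbb{P}(r(y_1,y_2)=2\mid g)=1-\mathbb{P}(r(y_1,y_2)=1\mid g)$; if $\lambda=0$, $r(y_1,y_2)=1$ when $g(y_1)>g(y_2)$ and $r(y_1,y_2)=2$ when $g(y_1)<g(y_2)$ (ties broken arbitrarily). Here $\Phi$ is the standard normal CDF. Define $\mathrm{EUBO}(y_1,y_2)=\mathbb{E}[\max\{g(y_1),g(y_2)\}]$.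 Define $$W_\lambda(y_1,y_2)=\mathbb{E}\Big[\max_{y\in\mathcal{Y}}\mathbb{E}[g(y)\mid r(y_1,y_2)]\Big]=\sum_{i\in\{1,2\}:\,\mathbb{P}(r(y_1,y_2)=i)>0}\mathbb{P}(r(y_1,y_2)=i)\max_{y\in\mathcal{Y}}\mathbb{E}[g(y)\mid r(y_1,y_2)=i],$$ and $V_\lambda(y_1,y_2)=W_\lambda(y_1,y_2)-\max_{y\in\mathcal{Y}}\mathbb{E}[g(y)]$. It is assumed that all maxima over $\mathcal{Y}$ of (conditional) posterior means appearing here are attained. *)

theory Defs
  imports "HOL-Probability.Probability"
begin

definition gaussian_rv :: "'a measure \<Rightarrow> ('a \<Rightarrow> real) \<Rightarrow> real \<Rightarrow> real \<Rightarrow> bool" where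
  "gaussian_rv M X m v \<longleftrightarrow>
     X \<in> borel_measurable M \<and>
     (if v = 0 then (AE \<omega> in M. X \<omega> = m)
      else v > 0 \<and> distributed M lborel X (\<lambda>x. ennreal (normal_density m (sqrt v) x)))"

definition gaussian_process ::
  "'a measure \<Rightarrow> ('a \<Rightarrow> real^'k \<Rightarrow> real) \<Rightarrow> (real^'k \<Rightarrow> real) \<Rightarrow> (real^'k \<Rightarrow> real^'k \<Rightarrow> real) \<Rightarrow> bool"
where
  "gaussian_process M G mu K \<longleftrightarrow>
     prob_space M \<and>
     (\<forall>S (c :: real^'k \<Rightarrow> real). finite S \<longrightarrow>
        gaussian_rv M (\<lambda>\<omega>. \<Sum>x\<in>S. c x * G \<omega> x)
          (\<Sum>x\<in>S. c x * mu x)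
          (\<Sum>x\<in>S. \<Sum>x'\<in>S. c x * c x' * K x x'))"

definition Phi :: "real \<Rightarrow> real" where
  "Phi x = (\<integral>t. indicator {..x} t * std_normal_density t \<partial>lborel)"

text \<open>Conditional probability P(r(y1,y2) = i | g), as a function of the sample point;
  for lambda = 0, ties g(y1) = g(y2) are broken as response 2.\<close>
definition resp_prob :: "('a \<Rightarrow> real^'k \<Rightarrow> real) \<Rightarrow> real \<Rightarrow> real^'k \<Rightarrow> real^'k \<Rightarrow> nat \<Rightarrow> 'a \<Rightarrow> real" where
  "resp_prob G lam y1 y2 i \<omega> =
     (let p1 = (if lam > 0 then Phi ((G \<omega> y1 - G \<omega> y2) / (sqrt 2 * lam))
                else (if G \<omega> y1 > G \<omega> y2 then 1 else 0))
      in if i = 1 then p1 else 1 - p1)"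

definition P_resp :: "'a measure \<Rightarrow> ('a \<Rightarrow> real^'k \<Rightarrow> real) \<Rightarrow> real \<Rightarrow> real^'k \<Rightarrow> real^'k \<Rightarrow> nat \<Rightarrow> real" where
  "P_resp M G lam y1 y2 i = (\<integral>\<omega>. resp_prob G lam y1 y2 i \<omega> \<partial>M)"

text \<open>E[g(y) | r(y1,y2) = i] = E[g(y) 1{r=i}] / P(r=i) = E[g(y) P(r=i|g)] / P(r=i).\<close>
definition post_mean :: "'a measure \<Rightarrow> ('a \<Rightarrow> real^'k \<Rightarrow> real) \<Rightarrow> real \<Rightarrow> real^'k \<Rightarrow> real^'k \<Rightarrow> nat \<Rightarrow> real^'k \<Rightarrow> real" where
  "post_mean M G lam y1 y2 i y =
     (\<integral>\<omega>. G \<omega> y * resp_prob G lam y1 y2 i \<omega> \<partial>M) / P_resp M G lam y1 y2 i"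

definition EUBO :: "'a measure \<Rightarrow> ('a \<Rightarrow> real^'k \<Rightarrow> real) \<Rightarrow> real^'k \<Rightarrow> real^'k \<Rightarrow> real" where
  "EUBO M G y1 y2 = (\<integral>\<omega>. max (G \<omega> y1) (G \<omega> y2) \<partial>M)"

text \<open>W_lambda; maxima over Y written as suprema (attainment is assumed in the theorem).\<close>
definition W :: "'a measure \<Rightarrow> ('a \<Rightarrow> real^'k \<Rightarrow> real) \<Rightarrow> (real^'k) set \<Rightarrow> real \<Rightarrow> real^'k \<Rightarrow> real^'k \<Rightarrow> real" where
  "W M G Y lam y1 y2 =
     (\<Sum>i\<in>{i\<in>{1::nat,2}. P_resp M G lam y1 y2 i > 0}.
        P_resp M G lam y1 y2 i * (SUP y\<in>Y. post_mean M G lam y1 y2 i y))"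

definition V :: "'a measure \<Rightarrow> ('a \<Rightarrow> real^'k \<Rightarrow> real) \<Rightarrow> (real^'k) set \<Rightarrow> real \<Rightarrow> real^'k \<Rightarrow> real^'k \<Rightarrow> real" where
  "V M G Y lam y1 y2 = W M G Y lam y1 y2 - (SUP y\<in>Y. (\<integral>\<omega>. G \<omega> y \<partial>M))"

end

theory Submission
  imports Defs
begin


lemma int_ind_phi: "A \<in> sets borel \<Longrightarrow> integrable lborel (\<lambda>t. indicator A t * std_normal_density t)"
  using integrable_real_mult_indicator[of A lborel "std_normal_density"]
  by (simp add: mult.commute)

lemma Phi_nonneg: "0 \<le> Phi x"
  unfolding Phi_def by (intro integral_nonneg_AE) auto

lemma Phi_le1: "Phi x \<le> 1"
proof -
  have "Phi x \<le> (\<integral>t. std_normal_density t \<partial>lborel)"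
    unfolding Phi_def
    by (intro integral_mono int_ind_phi) (auto simp: indicator_def)
  then show ?thesis by simp
qed

lemma Phi_mono: "mono Phi"
proof
  fix x y :: real assume "x \<le> y"
  then show "Phi x \<le> Phi y"
    unfolding Phi_def
    by (intro integral_mono int_ind_phi) (auto simp: indicator_def)
qed

lemma Phi_meas[measurable]: "Phi \<in> borel_measurable borel"
  by (rule borel_measurable_mono[OF Phi_mono])

lemma half_phi: "(\<integral>u. indicator {0..} u * std_normal_density u \<partial>lborel) = 1/2"
proof -
  have "(\<integral>u. indicator {0..} u * std_normal_density u \<partial>lborel)
     = \<bar>sqrt 2\<bar> *\<^sub>R (\<integral>x. indicator {0..} (0 + sqrt 2 * x) * std_normal_density (0 + sqrt 2 * x) \<partial>lborel)"
    by (rule lborel_integral_real_affine) simp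
  also have "(\<lambda>x. indicator {0..} (0 + sqrt 2 * x) * std_normal_density (0 + sqrt 2 * x))
      = (\<lambda>x. (1 / sqrt (2*pi)) * (indicator {0..} x *\<^sub>R exp (- x\<^sup>2)))"
    by (auto simp: std_normal_density_def indicator_def power_mult_distrib fun_eq_iff zero_le_mult_iff)
  also have "(\<integral>x. (1 / sqrt (2*pi)) * (indicator {0..} x *\<^sub>R exp (- x\<^sup>2)) \<partial>lborel) = (1 / sqrt (2*pi)) * (sqrt pi / 2)"
    using has_bochner_integral_integral_eq[OF gaussian_moment_0] by (simp add: field_simps)
  also have "\<bar>sqrt 2\<bar> *\<^sub>R ((1 / sqrt (2*pi)) * (sqrt pi / 2)) = 1/2"
    by (simp add: real_sqrt_mult)
  finally show ?thesis .
qed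

lemma Phi_tail: assumes t: "t \<ge> 0" shows "Phi (-t) \<le> exp (-t\<^sup>2/2) / 2"
proof -
  have "Phi (-t) = \<bar>-1\<bar> *\<^sub>R (\<integral>u. indicator {..-t} (-t + -1 * u) * std_normal_density (-t + -1 * u) \<partial>lborel)"
    unfolding Phi_def by (rule lborel_integral_real_affine) simp
  also have "\<dots> = (\<integral>u. indicator {0..} u * normal_density (-t) 1 u \<partial>lborel)"
    apply simp
    apply (rule Bochner_Integration.integral_cong)
    by (auto simp: indicator_def normal_density_def power2_eq_square algebra_simps)
  also have "\<dots> \<le> (\<integral>u. exp (-t\<^sup>2/2) * (indicator {0..} u * std_normal_density u) \<partial>lborel)"
  proof (intro integral_mono)
    show "integrable lborel (\<lambda>u. indicator {0..} u * normal_density (-t) 1 u)"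
      using integrable_real_mult_indicator[of "{0..}" lborel "normal_density (-t) 1"]
      by (simp add: mult.commute)
    show "integrable lborel (\<lambda>u. exp (-t\<^sup>2/2) * (indicator {0..} u * std_normal_density u))"
      by (intro integrable_mult_right int_ind_phi) auto
    fix u :: real
    show "indicator {0..} u * normal_density (-t) 1 u \<le> exp (-t\<^sup>2/2) * (indicator {0..} u * std_normal_density u)"
    proof (cases "u \<ge> 0")
      case True
      have sq: "(u - -t)\<^sup>2 = t\<^sup>2 + u\<^sup>2 + 2*(t*u)" by (simp add: power2_eq_square algebra_simps)
      have "exp (-(u - -t)\<^sup>2 / 2) \<le> exp (-t\<^sup>2/2) * exp (- u\<^sup>2 / 2)"
        unfolding exp_add[symmetric] exp_le_cancel_iff sq using mult_nonneg_nonneg[OF t True]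
        by (simp add: field_simps)
      then show ?thesis using True
        by (simp add: normal_density_def std_normal_density_def divide_right_mono)
    qed simp
  qed
  also have "\<dots> = exp (-t\<^sup>2/2) / 2" by (simp add: half_phi)
  finally show ?thesis .
qed

lemma Phi_upper: "1 - Phi t \<le> Phi (-t)"
proof -
  have "1 - Phi t = (\<integral>x. std_normal_density x \<partial>lborel) - Phi t" by simp
  also have "\<dots> = (\<integral>x. indicator {t<..} x * std_normal_density x \<partial>lborel)"
    unfolding Phi_def
  proof -
    have "(\<integral>x. std_normal_density x \<partial>lborel) - (\<integral>x. indicator {..t} x * std_normal_density x \<partial>lborel)
       = (\<integral>x. std_normal_density x - indicator {..t} x * std_normal_density x \<partial>lborel)"
      by (rule Bochner_Integration.integral_diff[symmetric]) (auto intro!: int_ind_phi)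
    also have "\<dots> = (\<integral>x. indicator {t<..} x * std_normal_density x \<partial>lborel)"
      by (rule Bochner_Integration.integral_cong) (auto simp: indicator_def)
    finally show "(\<integral>x. std_normal_density x \<partial>lborel) - (\<integral>x. indicator {..t} x * std_normal_density x \<partial>lborel) = (\<integral>x. indicator {t<..} x * std_normal_density x \<partial>lborel)" .
  qed
  also have "\<dots> = \<bar>-1\<bar> *\<^sub>R (\<integral>x. indicator {t<..} (0 + -1 * x) * std_normal_density (0 + -1 * x) \<partial>lborel)"
    by (rule lborel_integral_real_affine) simp
  also have "\<dots> \<le> Phi (-t)"
    unfolding Phi_def
  proof (simp, rule integral_mono)
    show "integrable lborel (\<lambda>x. indicator {t<..} (- x) * std_normal_density (- x))"
      using lborel_integrable_real_affine[OF int_ind_phi[of "{t<..}"], of "-1" 0] by simp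
    show "integrable lborel (\<lambda>x. indicator {..-t} x * std_normal_density x)"
      by (rule int_ind_phi) simp
  qed (auto simp: indicator_def std_normal_density_def)
  finally show ?thesis .
qed

lemma texp: fixes t :: real assumes "t \<ge> 0" shows "t * exp (-t\<^sup>2/2) \<le> exp (-1/2)"
proof -
  have "(1 + t\<^sup>2)/2 \<le> exp ((t\<^sup>2 - 1)/2)"
    using exp_ge_add_one_self[of "(t\<^sup>2 - 1)/2"] by (simp add: field_simps)
  moreover have "t \<le> (1 + t\<^sup>2)/2" using sum_squares_ge_zero[of "t - 1" 0]
    by (simp add: power2_eq_square algebra_simps)
  ultimately have "t \<le> exp ((t\<^sup>2 - 1)/2)" by linarith
  then have "t * exp (-t\<^sup>2/2) \<le> exp ((t\<^sup>2 - 1)/2) * exp (-t\<^sup>2/2)"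
    by (intro mult_right_mono) auto
  also have "\<dots> = exp (-1/2)" unfolding exp_add[symmetric] by (simp add: field_simps)
  finally show ?thesis .
qed

lemma key_bound: assumes s: "s > 0"
  shows "max a b - (a * Phi ((a-b)/s) + b * (1 - Phi ((a-b)/s))) \<le> s * exp (-1/2) / 2"
proof -
  have gen: "d * Phi (-(d/s)) \<le> s * exp (-1/2) / 2" if d: "d \<ge> 0" for d
  proof -
    have "d * Phi (-(d/s)) \<le> d * (exp (-(d/s)\<^sup>2/2) / 2)"
      using Phi_tail[of "d/s"] d s by (intro mult_left_mono) auto
    also have "\<dots> = s * ((d/s) * exp (-(d/s)\<^sup>2/2)) / 2" using s by simp
    also have "\<dots> \<le> s * exp (-1/2) / 2"
      using texp[of "d/s"] d s by (intro divide_right_mono mult_left_mono) auto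
    finally show ?thesis .
  qed
  show ?thesis
  proof (cases "a \<ge> b")
    case True
    have "max a b - (a * Phi ((a-b)/s) + b * (1 - Phi ((a-b)/s))) = (a-b) * (1 - Phi ((a-b)/s))"
      using True by (simp add: algebra_simps)
    also have "\<dots> \<le> (a-b) * Phi (-((a-b)/s))"
      using True Phi_upper by (intro mult_left_mono) auto
    finally show ?thesis using gen[of "a-b"] True by linarith
  next
    case False
    have "max a b - (a * Phi ((a-b)/s) + b * (1 - Phi ((a-b)/s))) = (b-a) * Phi (-((b-a)/s))"
      using False by (simp add: algebra_simps minus_divide_left)
    then show ?thesis using gen[of "b-a"] False by linarith
  qed
qed



lemma grv_int: assumes "prob_space M" "gaussian_rv M X m v" shows "integrable M X"
proof (cases "v = 0")
  case True
  have X: "X \<in> borel_measurable M" "AE \<omega> in M. X \<omega> = m" using assms(2) True unfolding gaussian_rv_def by simp_all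
  interpret prob_space M by fact
  show ?thesis
    apply (rule integrable_cong_AE_imp[where g="\<lambda>_. m", OF _ X(1)])
     apply simp
    using X(2) apply eventually_elim by simp
next
  case False
  have v: "v > 0" and D: "distributed M lborel X (\<lambda>x. ennreal (normal_density m (sqrt v) x))"
    using assms(2) False unfolding gaussian_rv_def by simp_all
  show ?thesis
    by (rule distributed_integrable_var[OF D]) (simp_all add: integrable_normal_moment_nz_1 v)
qed

lemma gp_int: assumes "gaussian_process M G mu K" shows "integrable M (\<lambda>\<omega>. G \<omega> y)"
proof -
  have "prob_space M" using assms by (simp add: gaussian_process_def)
  moreover have "gaussian_rv M (\<lambda>\<omega>. \<Sum>x\<in>{y}. 1 * G \<omega> x) (\<Sum>x\<in>{y}. 1 * mu x) (\<Sum>x\<in>{y}. \<Sum>x'\<in>{y}. 1 * 1 * K x x')"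
    using assms unfolding gaussian_process_def
    apply (elim conjE)
    apply (drule spec[of _ "{y}"])
    apply (drule spec[of _ "\<lambda>_. 1"])
    by simp
  ultimately show ?thesis using grv_int by fastforce
qed

lemma term_lower:
  fixes f :: "'b \<Rightarrow> 'a \<Rightarrow> real" and r :: "'a \<Rightarrow> real"
  assumes r: "r \<in> borel_measurable M" "\<And>\<omega>. 0 \<le> r \<omega>" "\<And>\<omega>. r \<omega> \<le> 1"
    and ps: "prob_space M"
    and f: "\<And>y. integrable M (f y)" and yy: "yy \<in> Y"
    and att: "(\<integral>\<omega>. r \<omega> \<partial>M) > 0 \<Longrightarrow> \<exists>y\<in>Y. \<forall>y'\<in>Y.
        (\<integral>\<omega>. f y' \<omega> * r \<omega> \<partial>M) / (\<integral>\<omega>. r \<omega> \<partial>M) \<le> (\<integral>\<omega>. f y \<omega> * r \<omega> \<partial>M) / (\<integral>\<omega>. r \<omega> \<partial>M)"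
  shows "(\<integral>\<omega>. f yy \<omega> * r \<omega> \<partial>M) \<le>
     (if (\<integral>\<omega>. r \<omega> \<partial>M) > 0 then (\<integral>\<omega>. r \<omega> \<partial>M) * (SUP y\<in>Y. (\<integral>\<omega>. f y \<omega> * r \<omega> \<partial>M) / (\<integral>\<omega>. r \<omega> \<partial>M)) else 0)"
proof -
  interpret prob_space M by fact
  let ?P = "\<integral>\<omega>. r \<omega> \<partial>M"
  have ri: "integrable M r" using r by (intro integrable_const_bound[where B=1]) auto
  have fri: "integrable M (\<lambda>\<omega>. f y \<omega> * r \<omega>)" for y
    by (rule Bochner_Integration.integrable_bound[OF f[of y]]) (use r borel_measurable_integrable[OF f[of y]] in \<open>auto simp: abs_mult intro!: mult_left_le borel_measurable_times\<close>)
  show ?thesis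
  proof (cases "?P > 0")
    case True
    then obtain y0 where y0: "y0 \<in> Y" "\<forall>y'\<in>Y. (\<integral>\<omega>. f y' \<omega> * r \<omega> \<partial>M) / ?P \<le> (\<integral>\<omega>. f y0 \<omega> * r \<omega> \<partial>M) / ?P"
      using att by blast
    have "(\<integral>\<omega>. f yy \<omega> * r \<omega> \<partial>M) / ?P \<le> (SUP y\<in>Y. (\<integral>\<omega>. f y \<omega> * r \<omega> \<partial>M) / ?P)"
      by (rule cSUP_upper[OF yy]) (use y0 in \<open>auto simp: bdd_above_def\<close>)
    then have "?P * ((\<integral>\<omega>. f yy \<omega> * r \<omega> \<partial>M) / ?P) \<le> ?P * (SUP y\<in>Y. (\<integral>\<omega>. f y \<omega> * r \<omega> \<partial>M) / ?P)"
      using True by (intro mult_left_mono) auto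
    then show ?thesis using True by simp
  next
    case False
    have "?P \<ge> 0" using r by (intro integral_nonneg_AE) auto
    then have "?P = 0" using False by simp
    then have "AE \<omega> in M. r \<omega> = 0" using integral_nonneg_eq_0_iff_AE[OF ri] r by auto
    then have "(\<integral>\<omega>. f yy \<omega> * r \<omega> \<partial>M) = (\<integral>\<omega>. 0 \<partial>M)"
      by (intro integral_cong_AE) (use r fri in \<open>auto elim: AE_mp\<close>)
    then show ?thesis using False by simp
  qed
qed

lemma term_upper:
  fixes f :: "'b \<Rightarrow> 'a \<Rightarrow> real" and r :: "'a \<Rightarrow> real"
  assumes r: "r \<in> borel_measurable M" "\<And>\<omega>. 0 \<le> r \<omega>" "\<And>\<omega>. r \<omega> \<le> 1"
    and ps: "prob_space M"
    and f: "\<And>y. integrable M (f y)" and yy: "yy \<in> Y"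
    and att: "(\<integral>\<omega>. r \<omega> \<partial>M) > 0 \<Longrightarrow> \<exists>y\<in>Y. \<forall>y'\<in>Y.
        (\<integral>\<omega>. f y' \<omega> * r \<omega> \<partial>M) / (\<integral>\<omega>. r \<omega> \<partial>M) \<le> (\<integral>\<omega>. f y \<omega> * r \<omega> \<partial>M) / (\<integral>\<omega>. r \<omega> \<partial>M)"
  shows "\<exists>y0\<in>Y. (if (\<integral>\<omega>. r \<omega> \<partial>M) > 0 then (\<integral>\<omega>. r \<omega> \<partial>M) * (SUP y\<in>Y. (\<integral>\<omega>. f y \<omega> * r \<omega> \<partial>M) / (\<integral>\<omega>. r \<omega> \<partial>M)) else 0)
     = (\<integral>\<omega>. f y0 \<omega> * r \<omega> \<partial>M)"
proof -
  interpret prob_space M by fact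
  let ?P = "\<integral>\<omega>. r \<omega> \<partial>M"
  have ri: "integrable M r" using r by (intro integrable_const_bound[where B=1]) auto
  have fri: "integrable M (\<lambda>\<omega>. f y \<omega> * r \<omega>)" for y
    by (rule Bochner_Integration.integrable_bound[OF f[of y]]) (use r borel_measurable_integrable[OF f[of y]] in \<open>auto simp: abs_mult intro!: mult_left_le borel_measurable_times\<close>)
  show ?thesis
  proof (cases "?P > 0")
    case True
    then obtain y0 where y0: "y0 \<in> Y" "\<forall>y'\<in>Y. (\<integral>\<omega>. f y' \<omega> * r \<omega> \<partial>M) / ?P \<le> (\<integral>\<omega>. f y0 \<omega> * r \<omega> \<partial>M) / ?P"
      using att by blast
    have "(SUP y\<in>Y. (\<integral>\<omega>. f y \<omega> * r \<omega> \<partial>M) / ?P) = (\<integral>\<omega>. f y0 \<omega> * r \<omega> \<partial>M) / ?P"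
      by (rule antisym, rule cSUP_least) (use y0 in \<open>auto intro!: cSUP_upper simp: bdd_above_def\<close>)
    then show ?thesis using True y0 by (intro bexI[of _ y0]) auto
  next
    case False
    have "?P \<ge> 0" using r by (intro integral_nonneg_AE) auto
    then have "?P = 0" using False by simp
    then have "AE \<omega> in M. r \<omega> = 0" using integral_nonneg_eq_0_iff_AE[OF ri] r by auto
    then have "(\<integral>\<omega>. f yy \<omega> * r \<omega> \<partial>M) = (\<integral>\<omega>. 0 \<partial>M)"
      by (intro integral_cong_AE) (use r fri in \<open>auto elim: AE_mp\<close>)
    then show ?thesis using False yy by (intro bexI[of _ yy]) auto
  qed
qed



lemma W_eq: "W M G Y l a b = (\<Sum>i\<in>{1::nat,2}. if P_resp M G l a b i > 0 then
    P_resp M G l a b i * (SUP y\<in>Y. post_mean M G l a b i y) else 0)"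
  unfolding W_def by (rule sum.inter_filter) simp

lemma resp_props:
  assumes meas: "\<And>y. (\<lambda>\<omega>. G \<omega> y) \<in> borel_measurable M" and l: "l \<ge> 0"
  shows "resp_prob G l a b i \<in> borel_measurable M"
    "\<And>\<omega>. 0 \<le> resp_prob G l a b i \<omega>" "\<And>\<omega>. resp_prob G l a b i \<omega> \<le> 1"
    "resp_prob G l a b 2 \<omega> = 1 - resp_prob G l a b 1 \<omega>"
proof -
  have [measurable]: "(\<lambda>\<omega>. G \<omega> y) \<in> borel_measurable M" for y by (rule meas)
  show "resp_prob G l a b i \<in> borel_measurable M"
    unfolding resp_prob_def Let_def
    by (cases "l > 0"; cases "i = 1"; simp)
  show "\<And>\<omega>. 0 \<le> resp_prob G l a b i \<omega>"
    unfolding resp_prob_def Let_def using Phi_nonneg Phi_le1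
    by (cases "l > 0"; cases "i = 1"; simp)
  show "\<And>\<omega>. resp_prob G l a b i \<omega> \<le> 1"
    unfolding resp_prob_def Let_def using Phi_nonneg Phi_le1
    by (cases "l > 0"; cases "i = 1"; simp)
  show "resp_prob G l a b 2 \<omega> = 1 - resp_prob G l a b 1 \<omega>"
    unfolding resp_prob_def Let_def by simp
qed

lemma sum12: "(\<Sum>i\<in>{1::nat,2}. h i) = h 1 + h 2" by simp

lemma conv_le_max: fixes q x y :: real assumes "0 \<le> q" "q \<le> 1"
  shows "x * q + y * (1 - q) \<le> max x y"
proof -
  have "x * q \<le> max x y * q" "y * (1 - q) \<le> max x y * (1 - q)"
    using assms by (auto intro!: mult_right_mono)
  then have "x * q + y * (1 - q) \<le> max x y * q + max x y * (1 - q)" by linarith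
  also have "\<dots> = max x y" by (simp add: algebra_simps)
  finally show ?thesis .
qed

theorem theorem2:
  fixes M :: "'a measure" and G :: "'a \<Rightarrow> real^'k \<Rightarrow> real"
    and mu :: "real^'k \<Rightarrow> real" and K :: "real^'k \<Rightarrow> real^'k \<Rightarrow> real"
    and Y :: "(real^'k) set" and lam :: real and ys1 ys2 :: "real^'k"
  assumes GP: "gaussian_process M G mu K"
    and cont_mu: "continuous_on UNIV mu"
    and cont_K: "continuous_on UNIV (\<lambda>y. K y y)"
    and Y_compact: "compact Y"
    and lam_pos: "lam > 0"
    and ys_in: "ys1 \<in> Y" "ys2 \<in> Y"
    and ys_argmax: "\<forall>y1\<in>Y. \<forall>y2\<in>Y. EUBO M G y1 y2 \<le> EUBO M G ys1 ys2"
    and prior_max_attained: "\<exists>y\<in>Y. \<forall>y'\<in>Y. (\<integral>\<omega>. G \<omega> y' \<partial>M) \<le> (\<integral>\<omega>. G \<omega> y \<partial>M)"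
    and post_max_attained:
      "\<forall>l\<in>{0, lam}. \<forall>y1\<in>Y. \<forall>y2\<in>Y. \<forall>i\<in>{1::nat,2}. P_resp M G l y1 y2 i > 0 \<longrightarrow>
         (\<exists>y\<in>Y. \<forall>y'\<in>Y. post_mean M G l y1 y2 i y' \<le> post_mean M G l y1 y2 i y)"
  shows "\<forall>y1\<in>Y. \<forall>y2\<in>Y.
           V M G Y lam ys1 ys2 \<ge> V M G Y 0 y1 y2 - lam * (exp (-1/2) / sqrt 2)"
proof (intro ballI)
  fix y1 y2 assume y1: "y1 \<in> Y" and y2: "y2 \<in> Y"
  have ps: "prob_space M" using GP by (simp add: gaussian_process_def)
  interpret prob_space M by fact
  have gi: "\<And>y. integrable M (\<lambda>\<omega>. G \<omega> y)" using GP by (rule gp_int)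
  have gm: "\<And>y. (\<lambda>\<omega>. G \<omega> y) \<in> borel_measurable M" using gi by (rule borel_measurable_integrable)
  note rp0 = resp_props[where G=G and M=M and l=0, OF gm order.refl]
  note rpl = resp_props[where G=G and M=M and l=lam, OF gm less_imp_le[OF lam_pos]]
  let ?C = "lam * (exp (-1/2) / sqrt 2)"
  let ?r = "resp_prob G lam ys1 ys2 1"
  have ri: "integrable M (\<lambda>\<omega>. f \<omega> * r \<omega>)" if "integrable M f" "r \<in> borel_measurable M"
     "\<And>\<omega>. 0 \<le> r \<omega>" "\<And>\<omega>. r \<omega> \<le> 1" for f r :: "'a \<Rightarrow> real"
    by (rule Bochner_Integration.integrable_bound[OF that(1)])
       (use that borel_measurable_integrable[OF that(1)] in \<open>auto simp: abs_mult intro!: mult_left_le borel_measurable_times\<close>)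
  have att: "\<And>l a b i. l \<in> {0, lam} \<Longrightarrow> a \<in> Y \<Longrightarrow> b \<in> Y \<Longrightarrow> i \<in> {1,2} \<Longrightarrow>
      (\<integral>\<omega>. resp_prob G l a b i \<omega> \<partial>M) > 0 \<Longrightarrow> \<exists>y\<in>Y. \<forall>y'\<in>Y.
        (\<integral>\<omega>. G \<omega> y' * resp_prob G l a b i \<omega> \<partial>M) / (\<integral>\<omega>. resp_prob G l a b i \<omega> \<partial>M)
          \<le> (\<integral>\<omega>. G \<omega> y * resp_prob G l a b i \<omega> \<partial>M) / (\<integral>\<omega>. resp_prob G l a b i \<omega> \<partial>M)"
    using post_max_attained unfolding P_resp_def post_mean_def by blast
  have L: "(\<integral>\<omega>. G \<omega> yy * resp_prob G lam ys1 ys2 i \<omega> \<partial>M) \<le>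
     (if P_resp M G lam ys1 ys2 i > 0 then P_resp M G lam ys1 ys2 i * (SUP y\<in>Y. post_mean M G lam ys1 ys2 i y) else 0)"
    if "i \<in> {1,2}" "yy \<in> Y" for i yy
    unfolding P_resp_def post_mean_def
    by (rule term_lower[where f="\<lambda>y \<omega>. G \<omega> y", OF rpl(1-3) ps gi that(2) att]) (use that ys_in in auto)
  have W1: "W M G Y lam ys1 ys2 \<ge> (\<integral>\<omega>. G \<omega> ys1 * ?r \<omega> + G \<omega> ys2 * (1 - ?r \<omega>) \<partial>M)"
  proof -
    have "(\<integral>\<omega>. G \<omega> ys1 * ?r \<omega> + G \<omega> ys2 * (1 - ?r \<omega>) \<partial>M)
        = (\<integral>\<omega>. G \<omega> ys1 * ?r \<omega> \<partial>M) + (\<integral>\<omega>. G \<omega> ys2 * resp_prob G lam ys1 ys2 2 \<omega> \<partial>M)"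
      unfolding rpl(4)[symmetric]
      by (rule Bochner_Integration.integral_add) (auto intro!: ri gi rpl(1-3))
    also have "\<dots> \<le> W M G Y lam ys1 ys2"
      unfolding W_eq sum12
      by (rule add_mono[OF L[of 1 ys1, OF insertI1 ys_in(1)] L[of 2 ys2, OF insertI2[OF singletonI] ys_in(2)]])
    finally show ?thesis .
  qed
  have W2: "(\<integral>\<omega>. G \<omega> ys1 * ?r \<omega> + G \<omega> ys2 * (1 - ?r \<omega>) \<partial>M) \<ge> EUBO M G ys1 ys2 - ?C"
  proof -
    have mi: "integrable M (\<lambda>\<omega>. G \<omega> ys1 * ?r \<omega> + G \<omega> ys2 * (1 - ?r \<omega>))"
      unfolding rpl(4)[symmetric] by (auto intro!: ri gi rpl(1-3))
    have "EUBO M G ys1 ys2 - (\<integral>\<omega>. G \<omega> ys1 * ?r \<omega> + G \<omega> ys2 * (1 - ?r \<omega>) \<partial>M)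
        = (\<integral>\<omega>. max (G \<omega> ys1) (G \<omega> ys2) - (G \<omega> ys1 * ?r \<omega> + G \<omega> ys2 * (1 - ?r \<omega>)) \<partial>M)"
      unfolding EUBO_def by (rule Bochner_Integration.integral_diff[symmetric, OF _ mi]) (auto intro!: gi)
    also have "\<dots> \<le> (\<integral>\<omega>. ?C \<partial>M)"
    proof (rule integral_mono)
      show "integrable M (\<lambda>\<omega>. max (G \<omega> ys1) (G \<omega> ys2) - (G \<omega> ys1 * ?r \<omega> + G \<omega> ys2 * (1 - ?r \<omega>)))"
        by (rule Bochner_Integration.integrable_diff[OF _ mi]) (auto intro!: gi)
      fix \<omega>
      have s: "sqrt 2 * lam > 0" using lam_pos by simp
      have "sqrt 2 * lam * exp (-1/2) / 2 = ?C"
        by (simp add: field_simps)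
      then show "max (G \<omega> ys1) (G \<omega> ys2) - (G \<omega> ys1 * ?r \<omega> + G \<omega> ys2 * (1 - ?r \<omega>)) \<le> ?C"
        using key_bound[OF s, of "G \<omega> ys1" "G \<omega> ys2"] lam_pos
        by (simp add: resp_prob_def)
    qed simp
    also have "\<dots> = ?C" by (simp add: prob_space)
    finally show ?thesis by simp
  qed
  let ?q = "resp_prob G 0 y1 y2 1"
  have U: "\<exists>a\<in>Y. (if P_resp M G 0 y1 y2 i > 0 then P_resp M G 0 y1 y2 i * (SUP y\<in>Y. post_mean M G 0 y1 y2 i y) else 0)
      = (\<integral>\<omega>. G \<omega> a * resp_prob G 0 y1 y2 i \<omega> \<partial>M)"
    if "i \<in> {1,2}" for i
    unfolding P_resp_def post_mean_def
    by (rule term_upper[where f="\<lambda>y \<omega>. G \<omega> y", OF rp0(1-3) ps gi y1 att]) (use that y1 y2 in auto)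
  obtain a where a: "a \<in> Y" "(if P_resp M G 0 y1 y2 1 > 0 then P_resp M G 0 y1 y2 1 * (SUP y\<in>Y. post_mean M G 0 y1 y2 1 y) else 0)
      = (\<integral>\<omega>. G \<omega> a * ?q \<omega> \<partial>M)" using U[of 1] by auto
  obtain b where b: "b \<in> Y" "(if P_resp M G 0 y1 y2 2 > 0 then P_resp M G 0 y1 y2 2 * (SUP y\<in>Y. post_mean M G 0 y1 y2 2 y) else 0)
      = (\<integral>\<omega>. G \<omega> b * resp_prob G 0 y1 y2 2 \<omega> \<partial>M)" using U[of 2] by auto
  have W3: "W M G Y 0 y1 y2 \<le> EUBO M G ys1 ys2"
  proof -
    have "W M G Y 0 y1 y2 = (\<integral>\<omega>. G \<omega> a * ?q \<omega> \<partial>M) + (\<integral>\<omega>. G \<omega> b * resp_prob G 0 y1 y2 2 \<omega> \<partial>M)"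
      unfolding W_eq sum12 a(2) b(2) ..
    also have "\<dots> = (\<integral>\<omega>. G \<omega> a * ?q \<omega> + G \<omega> b * (1 - ?q \<omega>) \<partial>M)"
      unfolding rp0(4)[symmetric]
      by (rule Bochner_Integration.integral_add[symmetric]) (auto intro!: ri gi rp0(1-3))
    also have "\<dots> \<le> EUBO M G a b"
      unfolding EUBO_def
    proof (rule integral_mono)
      show "integrable M (\<lambda>\<omega>. G \<omega> a * ?q \<omega> + G \<omega> b * (1 - ?q \<omega>))"
        unfolding rp0(4)[symmetric] by (auto intro!: ri gi rp0(1-3))
      show "integrable M (\<lambda>\<omega>. max (G \<omega> a) (G \<omega> b))" by (auto intro!: gi)
      fix \<omega>
      show "G \<omega> a * ?q \<omega> + G \<omega> b * (1 - ?q \<omega>) \<le> max (G \<omega> a) (G \<omega> b)"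
        using conv_le_max[of "?q \<omega>" "G \<omega> a" "G \<omega> b"] rp0(2,3) by blast
    qed
    also have "\<dots> \<le> EUBO M G ys1 ys2" using ys_argmax a b by blast
    finally show ?thesis .
  qed
  show "V M G Y lam ys1 ys2 \<ge> V M G Y 0 y1 y2 - ?C"
    unfolding V_def using W1 W2 W3 by linarith
qed

end
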